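(* Let $a_2,a_3$ be integers with $1<a_2<a_3$ and $A=\{1,a_2,a_3\}$. Let $n$ and $p\ge 0$ be integers such that $SG(A,n,p)$ is a stride generator. If $SG(A,n,p)$ has a non-canonical break $y$ with break order $q$, then $n+q\le a_2$.
   Context: For integers $n$ and $i\ge 0$, an integer $x$ has an $n$-generation of order $i$ if there are integers $c_1,c_2\ge 0$ with $x+ia_3=c_2a_2+c_1$ and $c_1+c_2\le n+i$. For integers $n$ and $p\ge0$, $SG(A,n,p)$ is a stride generator if: (A) every integer $0\le x<a_3$ has an $n$-generation of some order $\le p$; (B) at least one integer $0\le x<a_3$ has no $n$-generation of order $<p$; (C) at least one integer $0\le y<a_3$ has no $(n-1)$-generation of any order $\le p+1$. Any $0\le y<a_3$ satisfying (C) is called a break. A break $y$ is canonical if there is no integer $j\ge 0$ with $y+ja_3=c_2a_2+c_1$, $c_1,c_2\ge 0$, $c_1+c_2\le (n-1)+j$; otherwise its break order is the smallest such $j$. *)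

theory Defs
  imports Main
begin

definition has_gen :: "int \<Rightarrow> int \<Rightarrow> int \<Rightarrow> nat \<Rightarrow> int \<Rightarrow> bool" where
  "has_gen a2 a3 n i x \<longleftrightarrow>
     (\<exists>c1 c2::int. c1 \<ge> 0 \<and> c2 \<ge> 0 \<and> x + int i * a3 = c2 * a2 + c1 \<and> c1 + c2 \<le> n + int i)"

definition is_break :: "int \<Rightarrow> int \<Rightarrow> int \<Rightarrow> nat \<Rightarrow> int \<Rightarrow> bool" where
  "is_break a2 a3 n p y \<longleftrightarrow>
     0 \<le> y \<and> y < a3 \<and> \<not> (\<exists>i \<le> p + 1. has_gen a2 a3 (n - 1) i y)"

definition stride_generator :: "int \<Rightarrow> int \<Rightarrow> int \<Rightarrow> nat \<Rightarrow> bool" where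
  "stride_generator a2 a3 n p \<longleftrightarrow>
     (\<forall>x. 0 \<le> x \<and> x < a3 \<longrightarrow> (\<exists>i \<le> p. has_gen a2 a3 n i x)) \<and>
     (\<exists>x. 0 \<le> x \<and> x < a3 \<and> \<not> (\<exists>i < p. has_gen a2 a3 n i x)) \<and>
     (\<exists>y. is_break a2 a3 n p y)"

definition canonical_break :: "int \<Rightarrow> int \<Rightarrow> int \<Rightarrow> nat \<Rightarrow> int \<Rightarrow> bool" where
  "canonical_break a2 a3 n p y \<longleftrightarrow>
     is_break a2 a3 n p y \<and> \<not> (\<exists>j. has_gen a2 a3 (n - 1) j y)"

definition break_order :: "int \<Rightarrow> int \<Rightarrow> int \<Rightarrow> int \<Rightarrow> nat" where
  "break_order a2 a3 n y = (LEAST j. has_gen a2 a3 (n - 1) j y)"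

end

theory Submission
  imports Defs
begin


definition FF :: "int \<Rightarrow> int \<Rightarrow> int" where
  "FF a z = z div a + z mod a"

lemma add_nocarry:
  fixes a x z :: int
  assumes "a > 0" "x mod a + z mod a < a"
  shows "(x + z) mod a = x mod a + z mod a" "(x + z) div a = x div a + z div a"
proof -
  have h: "(x mod a + z mod a) div a = 0"
    using assms by (simp add: div_pos_pos_trivial)
  show "(x + z) div a = x div a + z div a"
    using div_add1_eq[of x z a] h by simp
  show "(x + z) mod a = x mod a + z mod a"
  proof -
    have "(x + z) mod a = (x mod a + z mod a) mod a" by (simp add: mod_add_eq)
    also have "\<dots> = x mod a + z mod a" using assms by (intro mod_pos_pos_trivial) auto
    finally show ?thesis .
  qed
qed

lemma add_carry:
  fixes a x z :: int
  assumes "a > 0" "x mod a + z mod a \<ge> a"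
  shows "(x + z) mod a = x mod a + z mod a - a" "(x + z) div a = x div a + z div a + 1"
proof -
  have b1: "x mod a < a" "z mod a < a" using assms by auto
  have h: "(x mod a + z mod a) div a = 1"
  proof -
    have "(x mod a + z mod a) div a = (x mod a + z mod a - a) div a + 1"
      using assms by (simp add: div_pos_geq)
    moreover have "(x mod a + z mod a - a) div a = 0" using assms b1 by (intro div_pos_pos_trivial) auto
    ultimately show ?thesis by simp
  qed
  show "(x + z) div a = x div a + z div a + 1"
    using div_add1_eq[of x z a] h by simp
  show "(x + z) mod a = x mod a + z mod a - a"
  proof -
    have "(x + z) mod a = (x mod a + z mod a) mod a" by (simp add: mod_add_eq)
    also have "\<dots> = (x mod a + z mod a - a) mod a" by (simp add: mod_diff_right_eq[symmetric])
    also have "\<dots> = x mod a + z mod a - a" using assms b1 by (intro mod_pos_pos_trivial) auto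
    finally show ?thesis .
  qed
qed

lemma FF_nocarry:
  fixes a x z :: int
  assumes "a > 0" "x mod a + z mod a < a"
  shows "FF a (x + z) = FF a x + FF a z" "(x + z) mod a = x mod a + z mod a"
  using add_nocarry[OF assms] by (auto simp: FF_def)

lemma FF_carry:
  fixes a x z :: int
  assumes "a > 0" "x mod a + z mod a \<ge> a"
  shows "FF a (x + z) = FF a x + FF a z - (a - 1)" "(x + z) mod a = x mod a + z mod a - a"
  using add_carry[OF assms] by (auto simp: FF_def)

lemma FF_ge_mod:
  fixes a z :: int
  assumes "a > 0" "z \<ge> 0"
  shows "FF a z \<ge> z mod a"
  using assms by (simp add: FF_def pos_imp_zdiv_nonneg_iff)

lemma FF_small:
  fixes a z :: int
  assumes "0 \<le> z" "z < a"
  shows "FF a z = z"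
  using assms by (simp add: FF_def div_pos_pos_trivial mod_pos_pos_trivial)

lemma FF_shift:
  fixes a z i :: int
  assumes "a > 0"
  shows "FF a (z + i * a) = FF a z + i"
  using assms by (simp add: FF_def)

context
  fixes a w Q :: int
  assumes a2: "a \<ge> 2" and w1: "w \<ge> 1"
  and MS: "\<And>s. 1 \<le> s \<Longrightarrow> s \<le> Q \<Longrightarrow> 1 \<le> (s*w) mod a \<and> FF a (s*w) \<le> a - 2"
begin

lemma ms_decomp:
  assumes "1 \<le> s" "s < t" "t \<le> Q"
  shows "(t*w) mod a = (s*w) mod a + ((t-s)*w) mod a \<and> FF a (t*w) = FF a (s*w) + FF a ((t-s)*w)
       \<or> (t*w) mod a = (s*w) mod a + ((t-s)*w) mod a - a \<and> FF a (t*w) = FF a (s*w) + FF a ((t-s)*w) - (a - 1)"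
proof -
  have e: "t*w = s*w + (t-s)*w" by (simp add: algebra_simps)
  have ap: "a > 0" using a2 by simp
  show ?thesis
  proof (cases "(s*w) mod a + ((t-s)*w) mod a < a")
    case True
    then show ?thesis using FF_nocarry[OF ap True] e by simp
  next
    case False
    then have c: "(s*w) mod a + ((t-s)*w) mod a \<ge> a" by simp
    show ?thesis using FF_carry[OF ap c] e by simp
  qed
qed

lemma ms_distinct:
  assumes "1 \<le> s" "s \<le> Q" "1 \<le> t" "t \<le> Q" "s \<noteq> t"
  shows "(s*w) mod a \<noteq> (t*w) mod a"
proof -
  have ap: "a > 0" using a2 by simp
  { fix u v :: int assume u: "1 \<le> u" "u < v" "v \<le> Q"
    have d: "1 \<le> ((v-u)*w) mod a" using MS[of "v-u"] u by auto
    have rl: "((v-u)*w) mod a < a" using ap by simp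
    have "(u*w) mod a \<noteq> (v*w) mod a" using ms_decomp[OF u] d rl by auto }
  then show ?thesis using assms by (cases "s < t") (auto, metis linorder_neqE_linordered_idom)
qed

lemma ms_mono:
  assumes "1 \<le> s" "s \<le> Q" "1 \<le> t" "t \<le> Q" "(s*w) mod a < (t*w) mod a"
  shows "FF a (s*w) < FF a (t*w)"
proof -
  have ap: "a > 0" using a2 by simp
  show ?thesis
  proof (cases "s < t")
    case True
    have d: "1 \<le> ((t-s)*w) mod a" "FF a ((t-s)*w) \<le> a - 2" using MS[of "t-s"] True assms by auto
    have "FF a ((t-s)*w) \<ge> ((t-s)*w) mod a" using FF_ge_mod[OF ap] True w1 by simp
    moreover have "((t-s)*w) mod a < a" using ap by simp
    ultimately show ?thesis using ms_decomp[OF assms(1) True assms(4)] d assms(5) by auto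
  next
    case False
    then have lt: "t < s" using assms(5) by (metis linorder_neqE_linordered_idom order_less_irrefl)
    have d: "1 \<le> ((s-t)*w) mod a" "FF a ((s-t)*w) \<le> a - 2" using MS[of "s-t"] lt assms by auto
    show ?thesis using ms_decomp[OF assms(3) lt assms(2)] d assms(5) by auto
  qed
qed

lemma ms_pair:
  assumes "1 \<le> s" "s \<le> Q" "1 \<le> t" "t \<le> Q" "(s*w) mod a < (t*w) mod a"
  shows "a + w * max 0 (s - t) \<le> a * ((t*w) mod a - (s*w) mod a)"
proof (cases "s < t")
  case True
  then have "max 0 (s - t) = 0" by simp
  moreover have "a * 1 \<le> a * ((t*w) mod a - (s*w) mod a)"
    using assms(5) a2 by (intro mult_left_mono) auto
  ultimately show ?thesis by simp
next
  case False
  have ap: "a > 0" using a2 by simp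
  have lt: "t < s" using False assms(5) by (metis linorder_neqE_linordered_idom order_less_irrefl)
  define D where "D = s - t"
  have Dr: "1 \<le> D" "D \<le> Q" using lt assms unfolding D_def by auto
  have d: "1 \<le> (D*w) mod a" "FF a (D*w) \<le> a - 2" using MS[OF Dr] by auto
  have rl: "(D*w) mod a < a" using ap by simp
  have c: "(s*w) mod a = (t*w) mod a + (D*w) mod a - a"
    using ms_decomp[OF assms(3) lt assms(2)] d assms(5) rl unfolding D_def by auto
  have dm: "D*w = a * ((D*w) div a) + (D*w) mod a" by simp
  have kb: "(D*w) div a \<le> a - 2 - (D*w) mod a" using d(2) unfolding FF_def by simp
  have "a * ((D*w) div a) \<le> a * (a - 2 - (D*w) mod a)" using kb ap by (intro mult_left_mono) auto
  moreover have "a + w * D = a + a * ((D*w) div a) + (D*w) mod a"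
    using dm by (simp add: algebra_simps)
  ultimately have "a + w * D \<le> a + a * (a - 2 - (D*w) mod a) + (D*w) mod a"
    by linarith
  also have "\<dots> \<le> a * (a - (D*w) mod a)"
    using rl by (simp add: algebra_simps)
  finally have "a + w * D \<le> a * (a - (D*w) mod a)" .
  moreover have "max 0 (s - t) = D" using lt unfolding D_def by simp
  ultimately show ?thesis using c by simp
qed


lemma lemmaK:
  assumes Q1: "1 \<le> Q" and L1: "1 \<le> L" and bnd: "\<And>s. 1 \<le> s \<Longrightarrow> s \<le> Q \<Longrightarrow> L \<le> (s*w) mod a \<and> FF a (s*w) \<le> U"
  shows "Q + (Q*w) div a + L - 1 \<le> U"
proof -
  define r where "r = (\<lambda>s::int. (s*w) mod a)"
  define f where "f = (\<lambda>s::int. FF a (s*w))"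
  define A where "A = {1..Q}"
  define Lo where "Lo = {s\<in>A. r s \<le> r Q}"
  define Hi where "Hi = {s\<in>A. r Q < r s}"
  have fA: "finite A" unfolding A_def by simp
  have fin: "finite Lo" "finite Hi" unfolding Lo_def Hi_def using fA by auto
  have un: "A = Lo \<union> Hi" "Lo \<inter> Hi = {}" unfolding Lo_def Hi_def by auto
  have cA: "card A = card Lo + card Hi" using un fin by (simp add: card_Un_disjoint)
  have cA2: "int (card A) = Q" unfolding A_def using Q1 by simp
  have inj1: "inj_on r Lo"
    unfolding inj_on_def Lo_def A_def r_def using ms_distinct by auto
  have im1: "r ` Lo \<subseteq> {L .. r Q}"
    unfolding Lo_def A_def r_def using bnd by auto
  have c1: "card Lo \<le> card {L .. r Q}"
    using card_inj_on_le[OF inj1 im1] by simp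
  have QL: "Q \<in> Lo" unfolding Lo_def A_def using Q1 by simp
  have "L \<le> r Q" using bnd[of Q] Q1 unfolding r_def by auto
  then have c1': "int (card Lo) \<le> r Q - L + 1" using c1 by simp
  have inj2: "inj_on f Hi"
  proof (rule inj_onI)
    fix s t assume st: "s \<in> Hi" "t \<in> Hi" "f s = f t"
    show "s = t"
    proof (rule ccontr)
      assume "s \<noteq> t"
      then have "r s \<noteq> r t" using st ms_distinct unfolding Hi_def A_def r_def by auto
      then have "r s < r t \<or> r t < r s" by auto
      then show False using st ms_mono unfolding Hi_def A_def r_def f_def
        by (metis (mono_tags, lifting) atLeastAtMost_iff mem_Collect_eq order_less_irrefl)
    qed
  qed
  have im2: "f ` Hi \<subseteq> {f Q + 1 .. U}"
  proof
    fix x assume "x \<in> f ` Hi"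
    then obtain s where s: "s \<in> Hi" "x = f s" by auto
    have "f Q < f s" using s ms_mono[of Q s] Q1 unfolding Hi_def A_def r_def f_def by auto
    moreover have "f s \<le> U" using s bnd unfolding Hi_def A_def f_def by auto
    ultimately show "x \<in> {f Q + 1 .. U}" using s by auto
  qed
  have c2: "card Hi \<le> card {f Q + 1 .. U}"
    using card_inj_on_le[OF inj2 im2] by simp
  have "f Q \<le> U" using bnd[of Q] Q1 unfolding f_def by auto
  then have c2': "int (card Hi) \<le> U - f Q" using c2 by simp
  have "Q \<le> r Q - L + 1 + (U - f Q)" using cA cA2 c1' c2' by linarith
  then show ?thesis unfolding r_def f_def FF_def by simp
qed


lemma chain:
  assumes j0: "1 \<le> j0" "j0 \<le> Q"
    and minj0: "\<And>s. 1 \<le> s \<Longrightarrow> s \<le> Q \<Longrightarrow> (j0*w) mod a \<le> (s*w) mod a"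
  shows "finite S \<Longrightarrow> card S = n \<Longrightarrow> S \<subseteq> {1..Q} \<Longrightarrow> j0 \<in> S \<Longrightarrow> t \<in> S \<Longrightarrow>
     (\<forall>s\<in>S. (s*w) mod a \<le> (t*w) mod a) \<Longrightarrow>
     a * (int (card S) - 1) + w * min (j0 - Min S + Max S - t) (Max S - Min S) \<le> a * ((t*w) mod a - (j0*w) mod a)"
proof (induction n arbitrary: S t)
  case 0
  then show ?case by auto
next
  case (Suc n)
  note fS = Suc.prems(1) and cS = Suc.prems(2) and sub = Suc.prems(3) and j0S = Suc.prems(4)
    and tS = Suc.prems(5) and top = Suc.prems(6)
  define r where "r = (\<lambda>s::int. (s*w) mod a)"
  have tQ: "1 \<le> t" "t \<le> Q" using tS sub by auto
  show ?case
  proof (cases "t = j0")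
    case True
    have "S = {j0}"
    proof
      show "{j0} \<subseteq> S" using j0S by simp
      show "S \<subseteq> {j0}"
      proof
        fix s assume sS: "s \<in> S"
        have sQ: "1 \<le> s" "s \<le> Q" using sS sub by auto
        have "(s*w) mod a \<le> (j0*w) mod a" using top sS True by auto
        moreover have "(j0*w) mod a \<le> (s*w) mod a" using minj0 sQ by auto
        ultimately have "(s*w) mod a = (j0*w) mod a" by simp
        then have "s = j0" using ms_distinct[of s j0] sQ j0 by auto
        then show "s \<in> {j0}" by simp
      qed
    qed
    then show ?thesis using True by simp
  next
    case False
    define S0 where "S0 = S - {t}"
    have fS0: "finite S0" using fS unfolding S0_def by simp
    have cS0: "card S0 = n" using cS tS fS unfolding S0_def by simp
    have sub0: "S0 \<subseteq> {1..Q}" using sub unfolding S0_def by auto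
    have j0S0: "j0 \<in> S0" using j0S False unfolding S0_def by auto
    have ne0: "S0 \<noteq> {}" using j0S0 by auto
    have Sins: "S = insert t S0" using tS unfolding S0_def by auto
    obtain t0 where t0S0: "t0 \<in> S0" and t0max: "\<forall>s\<in>S0. r s \<le> r t0"
    proof -
      have "Max (r ` S0) \<in> r ` S0" using fS0 ne0 by (intro Max_in) auto
      then obtain t0 where "t0 \<in> S0" "r t0 = Max (r ` S0)" by auto
      moreover have "\<forall>s\<in>S0. r s \<le> Max (r ` S0)" using fS0 by auto
      ultimately show ?thesis using that by auto
    qed
    have IH: "a * (int (card S0) - 1) + w * min (j0 - Min S0 + Max S0 - t0) (Max S0 - Min S0)
        \<le> a * ((t0*w) mod a - (j0*w) mod a)"
      using Suc.IH[OF fS0 cS0 sub0 j0S0 t0S0] t0max unfolding r_def by auto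
    have t0Q: "1 \<le> t0" "t0 \<le> Q" using t0S0 sub0 by auto
    have t0t: "t0 \<noteq> t" using t0S0 unfolding S0_def by auto
    have "r t0 \<le> r t" using top t0S0 unfolding S0_def r_def by auto
    moreover have "r t0 \<noteq> r t" using ms_distinct[OF t0Q tQ t0t] unfolding r_def by simp
    ultimately have lt: "(t0*w) mod a < (t*w) mod a" unfolding r_def by simp
    have pair: "a + w * max 0 (t0 - t) \<le> a * ((t*w) mod a - (t0*w) mod a)"
      using ms_pair[OF t0Q tQ lt] .
    have mn: "Min S = min t (Min S0)" "Max S = max t (Max S0)"
      using Sins fS0 ne0 by auto
    have b: "Min S0 \<le> j0" "Min S0 \<le> t0" "j0 \<le> Max S0" "t0 \<le> Max S0"
      using fS0 j0S0 t0S0 by auto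
    have Dle: "min (j0 - Min S + Max S - t) (Max S - Min S)
        \<le> min (j0 - Min S0 + Max S0 - t0) (Max S0 - Min S0) + max 0 (t0 - t)"
      unfolding mn using b by (simp add: min_def max_def) 
    have w0: "w \<ge> 0" using w1 by simp
    have "w * min (j0 - Min S + Max S - t) (Max S - Min S)
        \<le> w * (min (j0 - Min S0 + Max S0 - t0) (Max S0 - Min S0) + max 0 (t0 - t))"
      using mult_left_mono[OF Dle w0] .
    moreover have "int (card S) = int (card S0) + 1" using cS cS0 by simp
    ultimately show ?thesis using IH pair by (simp add: algebra_simps)
  qed
qed

end


lemma bwd_step:
  fixes a w x0 J s m :: int
  assumes ap: "a > 0" and w0: "w \<ge> 0" and s1: "1 \<le> s"
    and hi: "FF a (x0 + (J - s)*w) \<ge> m + 1" and lo: "FF a (x0 + J*w) \<le> m"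
  shows "(x0 + J*w) mod a + 1 \<le> (s*w) mod a \<and> FF a (s*w) \<le> FF a (x0 + J*w) + a - 2 - m"
proof -
  have e: "x0 + J*w = (x0 + (J - s)*w) + s*w" by (simp add: algebra_simps)
  have sw: "s*w \<ge> 0" using s1 w0 by simp
  have Fsw: "FF a (s*w) \<ge> 0" using FF_ge_mod[OF ap sw] ap by (meson order_trans pos_mod_sign)
  show ?thesis
  proof (cases "(x0 + (J - s)*w) mod a + (s*w) mod a < a")
    case True
    have "FF a (x0 + J*w) = FF a (x0 + (J - s)*w) + FF a (s*w)" by (subst e) (rule FF_nocarry(1)[OF ap True])
    then show ?thesis using hi lo Fsw by simp
  next
    case False
    then have c: "(x0 + (J - s)*w) mod a + (s*w) mod a \<ge> a" by simp
    have f: "FF a (x0 + J*w) = FF a (x0 + (J - s)*w) + FF a (s*w) - (a - 1)"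
      "(x0 + J*w) mod a = (x0 + (J - s)*w) mod a + (s*w) mod a - a"
      by (subst e, rule FF_carry(1)[OF ap c]) (subst e, rule FF_carry(2)[OF ap c])
    have "(x0 + (J - s)*w) mod a < a" using ap by simp
    then show ?thesis using f hi by simp
  qed
qed

lemma H_lemma:
  fixes a w r0 m J :: int
  assumes a2: "a \<ge> 2" and w1: "w \<ge> 1" and r0: "0 \<le> r0" "r0 < a" and J1: "J \<ge> 1"
    and hi: "\<And>j. 0 \<le> j \<Longrightarrow> j \<le> J - 1 \<Longrightarrow> FF a (r0 + j*w) \<ge> m + 1"
    and lo: "FF a (r0 + J*w) \<le> m"
  shows "J \<le> a - 1 - m"
proof -
  have ap: "a > 0" using a2 by simp
  define rho where "rho = (r0 + J*w) mod a"
  have rho0: "rho \<ge> 0" unfolding rho_def using ap by simp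
  have B: "\<And>s. 1 \<le> s \<Longrightarrow> s \<le> J \<Longrightarrow> rho + 1 \<le> (s*w) mod a \<and> FF a (s*w) \<le> FF a (r0 + J*w) + a - 2 - m"
    unfolding rho_def using bwd_step[OF ap _ _ hi lo] w1 by auto
  have MS: "\<And>s. 1 \<le> s \<Longrightarrow> s \<le> J \<Longrightarrow> 1 \<le> (s*w) mod a \<and> FF a (s*w) \<le> a - 2"
    using B rho0 lo by fastforce
  have K: "J + (J*w) div a + (rho + 1) - 1 \<le> FF a (r0 + J*w) + a - 2 - m"
    using lemmaK[OF a2 w1 MS J1 _ B] rho0 by simp
  have c: "r0 mod a + (J*w) mod a \<ge> a"
  proof -
    have "rho + 1 \<le> (J*w) mod a" using B[of J] J1 by simp
    moreover have "\<not> (r0 mod a + (J*w) mod a < a)"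
    proof
      assume nc: "r0 mod a + (J*w) mod a < a"
      have "(r0 + J*w) mod a = r0 mod a + (J*w) mod a" using FF_nocarry(2)[OF ap nc] .
      then have "rho \<ge> (J*w) mod a" unfolding rho_def using r0 by (simp add: mod_pos_pos_trivial)
      then show False using B[of J] J1 by simp
    qed
    ultimately show ?thesis by simp
  qed
  have "(r0 + J*w) div a = r0 div a + (J*w) div a + 1" using add_carry(2)[OF ap c] .
  moreover have "r0 div a = 0" using r0 by (simp add: div_pos_pos_trivial)
  ultimately have "FF a (r0 + J*w) = (J*w) div a + 1 + rho" unfolding FF_def rho_def by simp
  then show ?thesis using K by simp
qed

lemma B2_lemma:
  fixes a w y m J j0 jc :: int
  assumes a2: "a \<ge> 2" and w1: "w \<ge> 1" and y: "0 \<le> y" "y < a" "y \<le> m" and J3: "J \<ge> 3"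
    and hi: "\<And>j. 1 \<le> j \<Longrightarrow> j \<le> J - 1 \<Longrightarrow> FF a (y + j*w) \<ge> m + 1"
    and lo: "FF a (y + J*w) \<le> m"
    and j0: "1 \<le> j0" "j0 \<le> J - 2" "FF a (y + j0*w) \<le> m + 1"
    and jc: "1 \<le> jc" "jc \<le> J - 2" "(y + jc*w) mod a = a - 1"
  shows "J \<le> a - m"
proof -
  have ap: "a > 0" using a2 by simp
  define Q where "Q = J - 1"
  have Q1: "Q \<ge> 1" unfolding Q_def using J3 by simp
  have ym: "y mod a = y" "FF a y = y" using y by (simp_all add: mod_pos_pos_trivial FF_small)
  have B: "\<And>s. 1 \<le> s \<Longrightarrow> s \<le> Q \<Longrightarrow> (y + J*w) mod a + 1 \<le> (s*w) mod a \<and> FF a (s*w) \<le> FF a (y + J*w) + a - 2 - m"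
  proof -
    fix s assume s: "1 \<le> s" "s \<le> Q"
    have "FF a (y + (J - s)*w) \<ge> m + 1" using hi[of "J - s"] s unfolding Q_def by simp
    then show "(y + J*w) mod a + 1 \<le> (s*w) mod a \<and> FF a (s*w) \<le> FF a (y + J*w) + a - 2 - m"
      using bwd_step[OF ap _ s(1) _ lo] w1 by simp
  qed
  have rho0: "(y + J*w) mod a \<ge> 0" using ap by simp
  have MS: "\<And>s. 1 \<le> s \<Longrightarrow> s \<le> Q \<Longrightarrow> 1 \<le> (s*w) mod a \<and> FF a (s*w) \<le> a - 2"
    using B rho0 lo by fastforce
  have fwd: "\<And>s. 1 \<le> s \<Longrightarrow> s \<le> Q \<Longrightarrow> y + (s*w) mod a < a \<and> FF a (y + s*w) = y + FF a (s*w)"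
  proof -
    fix s assume s: "1 \<le> s" "s \<le> Q"
    show "y + (s*w) mod a < a \<and> FF a (y + s*w) = y + FF a (s*w)"
    proof (cases "y mod a + (s*w) mod a < a")
      case True
      then show ?thesis using FF_nocarry[OF ap True] ym by simp
    next
      case False
      then have c: "y mod a + (s*w) mod a \<ge> a" by simp
      have "FF a (y + s*w) = y + FF a (s*w) - (a - 1)" using FF_carry(1)[OF ap c] ym by simp
      moreover have "FF a (s*w) \<le> a - 2" using MS s by simp
      moreover have "FF a (y + s*w) \<ge> m + 1" using hi[of s] s unfolding Q_def by simp
      ultimately show ?thesis using y by simp
    qed
  qed
  have j0Q: "1 \<le> j0" "j0 \<le> Q" using j0 unfolding Q_def by auto
  have jcQ: "1 \<le> jc" "jc \<le> Q" using jc unfolding Q_def by auto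
  have rjc: "(jc*w) mod a = a - 1 - y"
  proof -
    have "(y + jc*w) mod a = y + (jc*w) mod a"
      using fwd[OF jcQ] FF_nocarry(2)[OF ap] ym by simp
    then show ?thesis using jc by simp
  qed
  have minj0: "\<And>s. 1 \<le> s \<Longrightarrow> s \<le> Q \<Longrightarrow> (j0*w) mod a \<le> (s*w) mod a"
  proof (rule ccontr)
    fix s assume s: "1 \<le> s" "s \<le> Q" and n: "\<not> (j0*w) mod a \<le> (s*w) mod a"
    then have "FF a (s*w) < FF a (j0*w)" using ms_mono[OF a2 w1 MS s j0Q] by simp
    then have "FF a (y + s*w) < FF a (y + j0*w)" using fwd[OF s] fwd[OF j0Q] by simp
    moreover have "FF a (y + s*w) \<ge> m + 1" using hi[of s] s unfolding Q_def by simp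
    ultimately show False using j0 by simp
  qed
  have fin: "finite {1..Q}" by simp
  have topjc: "\<forall>s\<in>{1..Q}. (s*w) mod a \<le> (jc*w) mod a"
    using fwd rjc by fastforce
  have ch: "a * (int (card {1..Q}) - 1) + w * min (j0 - Min {1..Q} + Max {1..Q} - jc) (Max {1..Q} - Min {1..Q})
      \<le> a * ((jc*w) mod a - (j0*w) mod a)"
    by (rule chain[OF a2 w1 MS j0Q minj0 fin refl]) (use j0Q jcQ topjc in auto)
  have cQ: "int (card {1..Q}) = Q" using Q1 by simp
  have mnQ: "Min {1..Q} = 1" "Max {1..Q} = Q" using Q1 by (auto intro!: Min_eqI Max_eqI)
  have Dge: "j0 \<le> min (j0 - 1 + Q - jc) (Q - 1)" using j0 jc unfolding Q_def by simp
  have "w * j0 \<le> w * min (j0 - 1 + Q - jc) (Q - 1)" using mult_left_mono[OF Dge] w1 by simp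
  moreover have "a * ((j0*w) div a) + (j0*w) mod a = j0 * w" by (rule mult_div_mod_eq)
  moreover have "(j0*w) mod a \<ge> 0" using ap by simp
  moreover have "w * j0 = j0 * w" by simp
  ultimately have "a * ((j0*w) div a) \<le> w * min (j0 - 1 + Q - jc) (Q - 1)" by linarith
  then have "a * (Q - 1) + a * ((j0*w) div a) \<le> a * ((jc*w) mod a - (j0*w) mod a)"
    using ch cQ mnQ by simp
  then have "a * (Q - 1 + (j0*w) div a) \<le> a * ((jc*w) mod a - (j0*w) mod a)" by (simp add: algebra_simps)
  then have le: "Q - 1 + (j0*w) div a \<le> (jc*w) mod a - (j0*w) mod a" using ap by simp
  have "FF a (y + j0*w) \<ge> m + 1" using hi[of j0] j0 by simp
  then have "y + (j0*w) div a + (j0*w) mod a \<ge> m + 1" using fwd[OF j0Q] unfolding FF_def by simp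
  then show ?thesis using le rjc unfolding Q_def by simp
qed


lemma has_gen_FF:
  fixes a2 a3 w x n :: int and i :: nat
  assumes ap: "a2 > 0" and x0: "x \<ge> 0" and a3: "a3 = a2 + w" and w0: "w \<ge> 0"
  shows "has_gen a2 a3 n i x \<longleftrightarrow> FF a2 (x + int i * w) \<le> n"
proof -
  define N where "N = x + int i * a3"
  have N0: "N \<ge> 0" unfolding N_def a3 using x0 w0 ap by simp
  have NF: "FF a2 N = FF a2 (x + int i * w) + int i"
  proof -
    have "N = (x + int i * w) + int i * a2" unfolding N_def a3 by (simp add: algebra_simps)
    then show ?thesis using FF_shift[OF ap] by simp
  qed
  show ?thesis
  proof
    assume "has_gen a2 a3 n i x"
    then obtain c1 c2 where c: "c1 \<ge> 0" "c2 \<ge> 0" "N = c2 * a2 + c1" "c1 + c2 \<le> n + int i"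
      unfolding has_gen_def N_def by auto
    have d: "N div a2 = c2 + c1 div a2" "N mod a2 = c1 mod a2" using c(3) ap by (simp_all add: algebra_simps)
    have e: "a2 * (c1 div a2) + c1 mod a2 = c1" by (rule mult_div_mod_eq)
    have nn: "c1 div a2 \<ge> 0" using c(1) ap by (simp add: pos_imp_zdiv_nonneg_iff)
    have "1 * (c1 div a2) \<le> a2 * (c1 div a2)" by (rule mult_right_mono) (use ap nn in auto)
    then have "c1 div a2 \<le> a2 * (c1 div a2)" by simp
    then have "FF a2 N \<le> c1 + c2" unfolding FF_def using d e by linarith
    then show "FF a2 (x + int i * w) \<le> n" using NF c(4) by simp
  next
    assume h: "FF a2 (x + int i * w) \<le> n"
    show "has_gen a2 a3 n i x"
      unfolding has_gen_def
    proof (intro exI conjI)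
      show "N mod a2 \<ge> 0" using ap by simp
      show "N div a2 \<ge> 0" using N0 ap by (simp add: pos_imp_zdiv_nonneg_iff)
      show "x + int i * a3 = N div a2 * a2 + N mod a2" unfolding N_def by simp
      show "N mod a2 + N div a2 \<le> n + int i" using h NF unfolding FF_def by simp
    qed
  qed
qed

theorem theorem1:
  fixes a2 a3 n y :: int and p q :: nat
  assumes "1 < a2" and "a2 < a3"
    and "stride_generator a2 a3 n p"
    and "is_break a2 a3 n p y"
    and "\<not> canonical_break a2 a3 n p y"
    and "q = break_order a2 a3 n y"
  shows "n + int q \<le> a2"
proof -
  note SG = assms(3) and brk = assms(4) and nc = assms(5) and qd = assms(6)
  define a where "a = a2"
  define w where "w = a3 - a2"
  have a2: "a \<ge> 2" unfolding a_def using assms(1) by simp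
  have ap: "a > 0" using a2 by simp
  have w1: "w \<ge> 1" unfolding w_def using assms(2) by simp
  have a3: "a3 = a + w" unfolding a_def w_def by simp
  have HG: "\<And>x n' i. x \<ge> 0 \<Longrightarrow> has_gen a2 a3 n' i x \<longleftrightarrow> FF a (x + int i * w) \<le> n'"
    unfolding a_def using has_gen_FF[OF _ _ a3[unfolded a_def]] assms(1) w1 by auto
  have y: "0 \<le> y" "y < a3" and nob: "\<And>i. i \<le> p + 1 \<Longrightarrow> \<not> has_gen a2 a3 (n - 1) i y"
    using brk unfolding is_break_def by auto
  have ex: "\<exists>j. has_gen a2 a3 (n - 1) j y" using nc brk unfolding canonical_break_def by auto
  have qg: "has_gen a2 a3 (n - 1) q y" using LeastI_ex[OF ex] qd unfolding break_order_def by simp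
  have ql: "\<And>j. j < q \<Longrightarrow> \<not> has_gen a2 a3 (n - 1) j y"
    using not_less_Least qd unfolding break_order_def by blast
  have qp: "q \<ge> p + 2"
  proof (rule ccontr)
    assume "\<not> q \<ge> p + 2"
    then have "q \<le> p + 1" by simp
    then show False using nob qg by blast
  qed
  have A: "\<And>x. 0 \<le> x \<Longrightarrow> x < a3 \<Longrightarrow> \<exists>i\<le>p. has_gen a2 a3 n i x"
    using SG unfolding stride_generator_def by blast
  have Q1: "\<And>j. j < q \<Longrightarrow> FF a (y + int j * w) \<ge> n"
    using ql HG[OF y(1)] by fastforce
  have Q2: "FF a (y + int q * w) \<le> n - 1" using qg HG[OF y(1)] by simp
  obtain i0 where i0: "i0 \<le> p" "FF a (y + int i0 * w) \<le> n"
    using A[OF y] HG[OF y(1)] by blast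
  have yw: "y \<ge> w"
  proof (rule ccontr)
    assume "\<not> y \<ge> w"
    then have "y + a < a3" using a3 by simp
    then obtain i where i: "i \<le> p" "has_gen a2 a3 n i (y + a)" using A[of "y + a"] y ap by auto
    then have "FF a (y + a + int i * w) \<le> n" using HG[of "y + a"] y ap by simp
    moreover have "y + a + int i * w = (y + int i * w) + 1 * a" by simp
    ultimately have "FF a (y + int i * w) + 1 \<le> n" using FF_shift[OF ap, of "y + int i * w" 1] by simp
    moreover have "FF a (y + int i * w) \<ge> n" using Q1[of i] i qp by simp
    ultimately show False by simp
  qed
  define y' where "y' = y - w"
  have y': "0 \<le> y'" "y' < a" unfolding y'_def using yw y a3 by auto
  have sh: "\<And>j::int. y + j * w = y' + (j + 1) * w" unfolding y'_def by (simp add: algebra_simps)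
  show ?thesis
  proof (cases "y' \<ge> n")
    case True
    have hi: "\<And>j. 0 \<le> j \<Longrightarrow> j \<le> (int q + 1) - 1 \<Longrightarrow> FF a (y' + j*w) \<ge> (n - 1) + 1"
    proof -
      fix j :: int assume j: "0 \<le> j" "j \<le> (int q + 1) - 1"
      show "FF a (y' + j*w) \<ge> (n - 1) + 1"
      proof (cases "j = 0")
        case True
        then show ?thesis using FF_small[OF y'] \<open>y' \<ge> n\<close> by simp
      next
        case False
        then have "nat (j - 1) < q" using j by simp
        then have "FF a (y + int (nat (j - 1)) * w) \<ge> n" using Q1 by blast
        moreover have "int (nat (j - 1)) = j - 1" using j False by simp
        ultimately show ?thesis using sh[of "j - 1"] by simp
      qed
    qed
    have lo: "FF a (y' + (int q + 1)*w) \<le> n - 1" using Q2 sh[of "int q"] by simp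
    have "int q + 1 \<le> a - 1 - (n - 1)"
      using H_lemma[OF a2 w1 y' _ hi lo] by simp
    then show ?thesis unfolding a_def by simp
  next
    case False
    then have ym: "y' \<le> n - 1" by simp
    have hi: "\<And>j. 1 \<le> j \<Longrightarrow> j \<le> (int q + 1) - 1 \<Longrightarrow> FF a (y' + j*w) \<ge> (n - 1) + 1"
    proof -
      fix j :: int assume j: "1 \<le> j" "j \<le> (int q + 1) - 1"
      then have "nat (j - 1) < q" by simp
      then have "FF a (y + int (nat (j - 1)) * w) \<ge> n" using Q1 by blast
      moreover have "int (nat (j - 1)) = j - 1" using j by simp
      ultimately show "FF a (y' + j*w) \<ge> (n - 1) + 1" using sh[of "j - 1"] by simp
    qed
    have lo: "FF a (y' + (int q + 1)*w) \<le> n - 1" using Q2 sh[of "int q"] by simp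
    have ya: "y' \<noteq> a - 1"
    proof
      assume ya: "y' = a - 1"
      have h1: "FF a (y' + 1*w) \<ge> n" using hi[of 1] qp by simp
      have b: "(y' + (int q + 1)*w) mod a + 1 \<le> (1*w) mod a \<and> FF a (1*w) \<le> FF a (y' + (int q + 1)*w) + a - 2 - (n - 1)"
        using bwd_step[OF ap _ _ _ lo, of 1] w1 hi[of "int q"] qp by simp
      have m0: "(y' + (int q + 1)*w) mod a \<ge> 0" using ap by simp
      have ym': "y' mod a = a - 1" using mod_pos_pos_trivial[OF y'] ya by simp
      have c: "y' mod a + w mod a \<ge> a" using ym' b m0 by simp
      have "FF a (y' + w) = FF a y' + FF a w - (a - 1)" using FF_carry(1)[OF ap c] .
      moreover have "FF a y' = a - 1" using FF_small[OF y'] ya by simp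
      ultimately have "FF a (y' + w) = FF a w" by simp
      moreover have "FF a w \<le> a - 2" using b lo by simp
      ultimately show False using h1 ym ya by simp
    qed
    then have y1: "y + 1 < a3" using y' a3 unfolding y'_def by simp
    obtain ic where ic: "ic \<le> p" "has_gen a2 a3 n ic (y + 1)" using A[of "y + 1"] y y1 by auto
    have ic2: "FF a (y + 1 + int ic * w) \<le> n" using ic(2) HG[of "y + 1"] y by simp
    have ic3: "FF a (y + int ic * w) \<ge> n" using Q1[of ic] ic qp by simp
    have icm: "(y + int ic * w) mod a = a - 1"
    proof (rule ccontr)
      assume nm: "(y + int ic * w) mod a \<noteq> a - 1"
      have lt: "(y + int ic * w) mod a < a" using ap by simp
      have one: "1 mod a = (1::int)" using a2 by simp
      have "(y + int ic * w) mod a + 1 < a" using lt nm by arith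
      then have "(y + int ic * w) mod a + 1 mod a < a" using one by simp
      then have "FF a ((y + int ic * w) + 1) = FF a (y + int ic * w) + FF a 1" using FF_nocarry(1)[OF ap] by blast
      moreover have "FF a 1 = 1" using FF_small[of 1 a] a2 by simp
      moreover have "(y + int ic * w) + 1 = y + 1 + int ic * w" by simp
      ultimately show False using ic2 ic3 by simp
    qed
    have J3: "int q + 1 \<ge> 3" using qp by simp
    have j0: "1 \<le> int i0 + 1" "int i0 + 1 \<le> int q + 1 - 2" "FF a (y' + (int i0 + 1)*w) \<le> (n - 1) + 1"
      using i0 qp sh[of "int i0"] by auto
    have jc: "1 \<le> int ic + 1" "int ic + 1 \<le> int q + 1 - 2" "(y' + (int ic + 1)*w) mod a = a - 1"
      using ic qp sh[of "int ic"] icm by auto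
    have "int q + 1 \<le> a - (n - 1)"
      using B2_lemma[OF a2 w1 y' ym J3 hi lo j0 jc] .
    then show ?thesis unfolding a_def by simp
  qed
qed

end
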